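(* Let $R$ be an arithmetic ring of Krull dimension $0$. Then $R$ is a Kaplansky ring and an adequate ring.
   Context: All rings are commutative with identity. $R$ is arithmetic if $R_M$ is a valuation ring (ideals totally ordered by inclusion) for every maximal ideal $M$. $R$ is Bézout if every finitely generated ideal is principal. $R$ is a Kaplansky ring (elementary divisor ring) if for every matrix $A$ over $R$ there exist invertible matrices $P,Q$ and a diagonal matrix $D$ over $R$ such that $PAQ=D$. $R$ is adequate if it is Bézout and for every $a,b\in R$ with $a\neq 0$ there exist $r,s\in R$ with $a=rs$, $Rr+Rb=R$, and $Rs'+Rb\neq R$ for every nonunit $s'$ dividing $s$. *)

theory Defs
  imports "Jordan_Normal_Form.Matrix"
begin

definition ring_ideal :: "'a::comm_ring_1 set \<Rightarrow> bool" where
  "ring_ideal I \<longleftrightarrow> 0 \<in> I \<and> (\<forall>x\<in>I. \<forall>y\<in>I. x + y \<in> I) \<and> (\<forall>r. \<forall>x\<in>I. r * x \<in> I)"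

definition prime_ideal :: "'a::comm_ring_1 set \<Rightarrow> bool" where
  "prime_ideal P \<longleftrightarrow> ring_ideal P \<and> P \<noteq> UNIV \<and> (\<forall>a b. a * b \<in> P \<longrightarrow> a \<in> P \<or> b \<in> P)"

definition maximal_ideal :: "'a::comm_ring_1 set \<Rightarrow> bool" where
  "maximal_ideal M \<longleftrightarrow> ring_ideal M \<and> M \<noteq> UNIV \<and>
     (\<forall>J. ring_ideal J \<and> M \<subseteq> J \<longrightarrow> J = M \<or> J = UNIV)"

text \<open>Krull dimension 0: there is a prime ideal (ring is nonzero) and
  every chain of primes has length 0, i.e. every prime ideal is maximal.\<close>
definition krull_dim_zero :: "'a::comm_ring_1 itself \<Rightarrow> bool" where
  "krull_dim_zero TYPE('a) \<longleftrightarrow> (\<exists>P::'a set. prime_ideal P) \<and>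
     (\<forall>P::'a set. prime_ideal P \<longrightarrow> maximal_ideal P)"

definition loc_rel :: "'a::comm_ring_1 set \<Rightarrow> (('a \<times> 'a) \<times> ('a \<times> 'a)) set" where
  "loc_rel M = {((a, s), (b, t)). s \<notin> M \<and> t \<notin> M \<and> (\<exists>u. u \<notin> M \<and> u * (a * t - b * s) = 0)}"

definition loc_carrier :: "'a::comm_ring_1 set \<Rightarrow> ('a \<times> 'a) set set" where
  "loc_carrier M = (UNIV \<times> (- M)) // loc_rel M"

definition loc_zero :: "'a::comm_ring_1 set \<Rightarrow> ('a \<times> 'a) set" where
  "loc_zero M = loc_rel M `` {(0, 1)}"

definition loc_add :: "'a::comm_ring_1 set \<Rightarrow> ('a \<times> 'a) set \<Rightarrow> ('a \<times> 'a) set \<Rightarrow> ('a \<times> 'a) set" where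
  "loc_add M X Y = loc_rel M `` {(a * t + b * s, s * t) | a s b t. (a, s) \<in> X \<and> (b, t) \<in> Y}"

definition loc_mult :: "'a::comm_ring_1 set \<Rightarrow> ('a \<times> 'a) set \<Rightarrow> ('a \<times> 'a) set \<Rightarrow> ('a \<times> 'a) set" where
  "loc_mult M X Y = loc_rel M `` {(a * b, s * t) | a s b t. (a, s) \<in> X \<and> (b, t) \<in> Y}"

definition loc_ideal :: "'a::comm_ring_1 set \<Rightarrow> ('a \<times> 'a) set set \<Rightarrow> bool" where
  "loc_ideal M I \<longleftrightarrow> I \<subseteq> loc_carrier M \<and> loc_zero M \<in> I \<and>
     (\<forall>X\<in>I. \<forall>Y\<in>I. loc_add M X Y \<in> I) \<and>
     (\<forall>X\<in>loc_carrier M. \<forall>Y\<in>I. loc_mult M X Y \<in> I)"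

definition loc_valuation :: "'a::comm_ring_1 set \<Rightarrow> bool" where
  "loc_valuation M \<longleftrightarrow> (\<forall>I J. loc_ideal M I \<and> loc_ideal M J \<longrightarrow> I \<subseteq> J \<or> J \<subseteq> I)"

definition arithmetic_ring :: "'a::comm_ring_1 itself \<Rightarrow> bool" where
  "arithmetic_ring TYPE('a) \<longleftrightarrow> (\<forall>M::'a set. maximal_ideal M \<longrightarrow> loc_valuation M)"

definition ideal_generated :: "'a::comm_ring_1 set \<Rightarrow> 'a set" where
  "ideal_generated S = \<Inter>{I. ring_ideal I \<and> S \<subseteq> I}"

definition bezout_ring :: "'a::comm_ring_1 itself \<Rightarrow> bool" where
  "bezout_ring TYPE('a) \<longleftrightarrow>
     (\<forall>S::'a set. finite S \<longrightarrow> (\<exists>a. ideal_generated S = {r * a | r. True}))"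

definition diagonal_rect :: "'a::zero mat \<Rightarrow> bool" where
  "diagonal_rect D \<longleftrightarrow> (\<forall>i j. i < dim_row D \<longrightarrow> j < dim_col D \<longrightarrow> i \<noteq> j \<longrightarrow> D $$ (i, j) = 0)"

definition kaplansky_ring :: "'a::comm_ring_1 itself \<Rightarrow> bool" where
  "kaplansky_ring TYPE('a) \<longleftrightarrow>
     (\<forall>m n (A::'a mat). A \<in> carrier_mat m n \<longrightarrow>
        (\<exists>P Q D. P \<in> carrier_mat m m \<and> Q \<in> carrier_mat n n \<and> invertible_mat P \<and> invertible_mat Q
           \<and> D \<in> carrier_mat m n \<and> diagonal_rect D \<and> P * A * Q = D))"

definition adequate_ring :: "'a::comm_ring_1 itself \<Rightarrow> bool" where
  "adequate_ring TYPE('a) \<longleftrightarrow> bezout_ring TYPE('a) \<and>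
     (\<forall>a b :: 'a. a \<noteq> 0 \<longrightarrow>
        (\<exists>r s. a = r * s \<and> {x * r + y * b | x y. True} = UNIV \<and>
           (\<forall>s'. s' dvd s \<and> \<not> s' dvd 1 \<longrightarrow> {x * s' + y * b | x y. True} \<noteq> UNIV)))"

end

theory Submission
  imports Defs "Jordan_Normal_Form.Determinant"
begin

lemma ideal_1: "ring_ideal I \<Longrightarrow> 1 \<in> I \<Longrightarrow> I = UNIV"
  unfolding ring_ideal_def by (metis UNIV_eq_I mult.right_neutral)

lemma ideal_diff: "ring_ideal I \<Longrightarrow> x \<in> I \<Longrightarrow> y \<in> I \<Longrightarrow> x - y \<in> I"
  unfolding ring_ideal_def by (metis diff_conv_add_uminus mult_minus1)

lemma ideal_multr: "ring_ideal I \<Longrightarrow> x \<in> I \<Longrightarrow> x * r \<in> I"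
  unfolding ring_ideal_def by (metis mult.commute)

definition ext_ideal :: "'a::comm_ring_1 set \<Rightarrow> 'a \<Rightarrow> 'a set" where
  "ext_ideal P a = {p + r * a | p r. p \<in> P}"

lemma ext_ideal: assumes "ring_ideal P" shows "ring_ideal (ext_ideal P a)" "P \<subseteq> ext_ideal P a" "a \<in> ext_ideal P a"
proof -
  show "ring_ideal (ext_ideal P a)"
    unfolding ring_ideal_def ext_ideal_def
  proof (intro conjI ballI allI)
    show "0 \<in> {p + r * a |p r. p \<in> P}" using assms unfolding ring_ideal_def by (intro CollectI exI[of _ 0]) auto
  next
    fix x y assume "x \<in> {p + r * a |p r. p \<in> P}" "y \<in> {p + r * a |p r. p \<in> P}"
    then obtain p r p' r' where "x = p + r * a" "y = p' + r' * a" "p \<in> P" "p' \<in> P" by auto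
    then show "x + y \<in> {p + r * a |p r. p \<in> P}" using assms unfolding ring_ideal_def
      by (intro CollectI exI[of _ "p + p'"] exI[of _ "r + r'"]) (auto simp: algebra_simps)
  next
    fix s x assume "x \<in> {p + r * a |p r. p \<in> P}"
    then obtain p r where "x = p + r * a" "p \<in> P" by auto
    moreover have "s * p \<in> P" using assms \<open>p \<in> P\<close> unfolding ring_ideal_def by auto
    moreover have "s * x = s * p + (s * r) * a" using \<open>x = p + r * a\<close> by (simp add: algebra_simps)
    ultimately show "s * x \<in> {p + r * a |p r. p \<in> P}" by blast
  qed
  show "P \<subseteq> ext_ideal P a" unfolding ext_ideal_def
  proof
    fix x assume "x \<in> P" then show "x \<in> {p + r * a |p r. p \<in> P}" by (intro CollectI exI[of _ x] exI[of _ 0]) auto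
  qed
  show "a \<in> ext_ideal P a" using assms unfolding ext_ideal_def ring_ideal_def
    by (intro CollectI exI[of _ 0] exI[of _ 1]) auto
qed

lemma max_prime: assumes "maximal_ideal M" shows "prime_ideal M"
proof -
  have I: "ring_ideal M" and nU: "M \<noteq> UNIV" using assms unfolding maximal_ideal_def by auto
  have "a \<in> M \<or> b \<in> M" if "a * b \<in> M" for a b
  proof (rule ccontr)
    assume "\<not> (a \<in> M \<or> b \<in> M)"
    then have "ext_ideal M a = UNIV" using assms ext_ideal[OF I, of a] unfolding maximal_ideal_def by blast
    then have "1 \<in> ext_ideal M a" by simp
    then obtain p r where "1 = p + r * a" "p \<in> M" unfolding ext_ideal_def by blast
    then have "b = p * b + r * (a * b)" by (metis mult.assoc mult_1 distrib_right)
    moreover have "p * b \<in> M" "r * (a * b) \<in> M" using I \<open>p \<in> M\<close> that unfolding ring_ideal_def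
      by (auto simp: mult.commute)
    ultimately have "b \<in> M" using I unfolding ring_ideal_def by metis
    with \<open>\<not> (a \<in> M \<or> b \<in> M)\<close> show False by blast
  qed
  then show ?thesis using I nU unfolding prime_ideal_def by blast
qed

lemma exists_prime:
  fixes J :: "'a::comm_ring_1 set"
  assumes J: "ring_ideal J" and S1: "1 \<in> S" and Sm: "\<forall>x\<in>S. \<forall>y\<in>S. x * y \<in> S" and JS: "J \<inter> S = {}"
  shows "\<exists>P. prime_ideal P \<and> J \<subseteq> P \<and> P \<inter> S = {}"
proof -
  define A where "A = {I. ring_ideal I \<and> J \<subseteq> I \<and> I \<inter> S = {}}"
  have "\<exists>M\<in>A. \<forall>X\<in>A. M \<subseteq> X \<longrightarrow> X = M"
  proof (rule Zorn_Lemma2, intro ballI)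
    fix C assume C: "C \<in> chains A"
    show "\<exists>U\<in>A. \<forall>X\<in>C. X \<subseteq> U"
    proof (cases "C = {}")
      case True then show ?thesis using J JS unfolding A_def by auto
    next
      case False
      have CA: "C \<subseteq> A" and ch: "\<forall>X\<in>C. \<forall>Y\<in>C. X \<subseteq> Y \<or> Y \<subseteq> X"
        using C unfolding chains_def chain_subset_def by auto
      have "ring_ideal (\<Union>C)" unfolding ring_ideal_def
      proof (intro conjI ballI allI)
        obtain X where "X \<in> C" using False by auto
        then show "0 \<in> \<Union>C" using CA unfolding A_def ring_ideal_def by auto
      next
        fix x y assume "x \<in> \<Union>C" "y \<in> \<Union>C"
        then obtain X Y where XY: "X \<in> C" "Y \<in> C" "x \<in> X" "y \<in> Y" by auto
        show "x + y \<in> \<Union>C"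
        proof (cases "X \<subseteq> Y")
          case True then show ?thesis using XY CA unfolding A_def ring_ideal_def by blast
        next
          case False then have "Y \<subseteq> X" using ch XY by blast
          then show ?thesis using XY CA unfolding A_def ring_ideal_def by blast
        qed
      next
        fix r x assume "x \<in> \<Union>C"
        then show "r * x \<in> \<Union>C" using CA unfolding A_def ring_ideal_def by blast
      qed
      moreover have "J \<subseteq> \<Union>C" using False CA unfolding A_def by auto
      moreover have "\<Union>C \<inter> S = {}" using CA unfolding A_def by auto
      ultimately show ?thesis unfolding A_def by auto
    qed
  qed
  then obtain P where PA: "P \<in> A" and Pmax: "\<forall>X\<in>A. P \<subseteq> X \<longrightarrow> X = P" by blast
  have I: "ring_ideal P" and JP: "J \<subseteq> P" and PS: "P \<inter> S = {}" using PA unfolding A_def by auto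
  have nU: "P \<noteq> UNIV" using PS S1 by auto
  have meet: "\<exists>s\<in>S. \<exists>p r. p \<in> P \<and> s = p + r * a" if "a \<notin> P" for a
  proof -
    have "ext_ideal P a \<notin> A"
      using Pmax ext_ideal[OF I, of a] that by blast
    then have "ext_ideal P a \<inter> S \<noteq> {}" using ext_ideal[OF I, of a] JP unfolding A_def by auto
    then show ?thesis unfolding ext_ideal_def by auto
  qed
  have "a \<in> P \<or> b \<in> P" if ab: "a * b \<in> P" for a b
  proof (rule ccontr)
    assume "\<not> (a \<in> P \<or> b \<in> P)"
    then obtain s1 p1 r1 s2 p2 r2 where s: "s1 \<in> S" "s2 \<in> S" "p1 \<in> P" "p2 \<in> P"
      "s1 = p1 + r1 * a" "s2 = p2 + r2 * b" using meet by metis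
    have "s1 * s2 = p1 * s2 + (r1 * a) * p2 + (r1 * r2) * (a * b)" unfolding s by (simp add: algebra_simps)
    moreover have "p1 * s2 \<in> P" "(r1 * a) * p2 \<in> P" "(r1 * r2) * (a * b) \<in> P"
      using I s ab ideal_multr[OF I] unfolding ring_ideal_def by auto
    ultimately have "s1 * s2 \<in> P" using I unfolding ring_ideal_def by metis
    moreover have "s1 * s2 \<in> S" using Sm s by auto
    ultimately show False using PS by auto
  qed
  then show ?thesis using I nU JP PS unfolding prime_ideal_def by blast
qed

lemma prime_notin_mult: "prime_ideal M \<Longrightarrow> s \<notin> M \<Longrightarrow> t \<notin> M \<Longrightarrow> s * t \<notin> M"
  unfolding prime_ideal_def by blast

lemma prime_one: "prime_ideal M \<Longrightarrow> (1::'a::comm_ring_1) \<notin> M"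
  unfolding prime_ideal_def using ideal_1 by blast

lemma loc_rel_iff: "((a, s), (b, t)) \<in> loc_rel M \<longleftrightarrow> s \<notin> M \<and> t \<notin> M \<and> (\<exists>u. u \<notin> M \<and> u * (a * t - b * s) = 0)"
  unfolding loc_rel_def by simp

lemma loc_equiv: assumes M: "prime_ideal M" shows "equiv (UNIV \<times> (- M)) (loc_rel M)"
proof (rule equivI)
  show "loc_rel M \<subseteq> (UNIV \<times> - M) \<times> (UNIV \<times> - M)" unfolding loc_rel_def by auto
  show "refl_on (UNIV \<times> - M) (loc_rel M)"
  proof (rule refl_onI)
    fix p :: "'a \<times> 'a" assume "p \<in> UNIV \<times> - M"
    moreover obtain a s where as: "p = (a, s)" by (metis prod.exhaust)
    ultimately have "s \<notin> M" by auto
    then show "(p, p) \<in> loc_rel M" unfolding as loc_rel_iff using prime_one[OF M] by auto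
  qed
  show "sym (loc_rel M)" unfolding sym_def
  proof (intro allI impI)
    fix p q assume pq: "(p, q) \<in> loc_rel M"
    obtain a s b t where ab: "p = (a, s)" "q = (b, t)" by (metis prod.exhaust)
    obtain u where "s \<notin> M" "t \<notin> M" "u \<notin> M" "u * (a * t - b * s) = 0" using pq unfolding ab loc_rel_iff by blast
    moreover have "u * (b * s - a * t) = - (u * (a * t - b * s))" by (simp add: algebra_simps)
    ultimately show "(q, p) \<in> loc_rel M" unfolding ab loc_rel_iff by auto
  qed
  show "trans (loc_rel M)" unfolding trans_def
  proof (intro allI impI)
    fix p q w assume pq: "(p, q) \<in> loc_rel M" and qw: "(q, w) \<in> loc_rel M"
    obtain a s b t c r where ab: "p = (a, s)" "q = (b, t)" "w = (c, r)" by (metis prod.exhaust)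
    obtain u where h1: "s \<notin> M" "t \<notin> M" "u \<notin> M" "u * (a * t - b * s) = 0" using pq unfolding ab loc_rel_iff by blast
    obtain v where h2: "r \<notin> M" "v \<notin> M" "v * (b * r - c * t) = 0" using qw unfolding ab loc_rel_iff by blast
    have "(u * v * t) * (a * r - c * s) = (v * r) * (u * (a * t - b * s)) + (u * s) * (v * (b * r - c * t))"
      by (simp add: algebra_simps)
    also have "\<dots> = 0" using h1 h2 by simp
    finally have "(u * v * t) * (a * r - c * s) = 0" .
    moreover have "u * v * t \<notin> M" using h1 h2 prime_notin_mult[OF M] by blast
    ultimately show "(p, w) \<in> loc_rel M" unfolding ab loc_rel_iff using h1 h2 by blast
  qed
qed

definition addp :: "'a::comm_ring_1 \<times> 'a \<Rightarrow> 'a \<times> 'a \<Rightarrow> 'a \<times> 'a" where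
  "addp p q = (fst p * snd q + fst q * snd p, snd p * snd q)"
definition mulp :: "'a::comm_ring_1 \<times> 'a \<Rightarrow> 'a \<times> 'a \<Rightarrow> 'a \<times> 'a" where
  "mulp p q = (fst p * fst q, snd p * snd q)"

lemma addp_compat: assumes M: "prime_ideal M" and "(p, p') \<in> loc_rel M" "(q, q') \<in> loc_rel M"
  shows "(addp p q, addp p' q') \<in> loc_rel M"
proof -
  obtain a s a' s' b t b' t' where pq: "p = (a, s)" "p' = (a', s')" "q = (b, t)" "q' = (b', t')"
    by (metis prod.exhaust)
  obtain u v where h: "s \<notin> M" "s' \<notin> M" "t \<notin> M" "t' \<notin> M" "u \<notin> M" "v \<notin> M"
    "u * (a * s' - a' * s) = 0" "v * (b * t' - b' * t) = 0"
    using assms(2,3) unfolding pq loc_rel_iff by blast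
  have "(u * v) * ((a * t + b * s) * (s' * t') - (a' * t' + b' * s') * (s * t))
     = (v * t * t') * (u * (a * s' - a' * s)) + (u * s * s') * (v * (b * t' - b' * t))"
    by (simp add: algebra_simps)
  also have "\<dots> = 0" using h by simp
  moreover have "u * v \<notin> M" "s * t \<notin> M" "s' * t' \<notin> M" using h prime_notin_mult[OF M] by auto
  ultimately show ?thesis unfolding pq addp_def loc_rel_def by simp blast
qed

lemma mulp_compat: assumes M: "prime_ideal M" and "(p, p') \<in> loc_rel M" "(q, q') \<in> loc_rel M"
  shows "(mulp p q, mulp p' q') \<in> loc_rel M"
proof -
  obtain a s a' s' b t b' t' where pq: "p = (a, s)" "p' = (a', s')" "q = (b, t)" "q' = (b', t')"
    by (metis prod.exhaust)
  obtain u v where h: "s \<notin> M" "s' \<notin> M" "t \<notin> M" "t' \<notin> M" "u \<notin> M" "v \<notin> M"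
    "u * (a * s' - a' * s) = 0" "v * (b * t' - b' * t) = 0"
    using assms(2,3) unfolding pq loc_rel_iff by blast
  have "(u * v) * ((a * b) * (s' * t') - (a' * b') * (s * t))
     = (v * b * t') * (u * (a * s' - a' * s)) + (u * a' * s) * (v * (b * t' - b' * t))"
    by (simp add: algebra_simps)
  also have "\<dots> = 0" using h by simp
  moreover have "u * v \<notin> M" "s * t \<notin> M" "s' * t' \<notin> M" using h prime_notin_mult[OF M] by auto
  ultimately show ?thesis unfolding pq mulp_def loc_rel_def by simp blast
qed

lemma class_eq_gen: assumes E: "equiv A r" and p: "p \<in> A"
  and S: "\<And>z. z \<in> S \<Longrightarrow> (g, z) \<in> r" and gS: "g \<in> S" and g: "(p, g) \<in> r"
  shows "r `` S = r `` {p}"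
proof -
  have "r `` S = r `` {g}"
  proof
    show "r `` S \<subseteq> r `` {g}"
    proof
      fix x assume "x \<in> r `` S"
      then obtain z where "z \<in> S" "(z, x) \<in> r" by blast
      moreover have "trans r" using E unfolding equiv_def by blast
      ultimately have "(g, x) \<in> r" using S by (meson transD)
      then show "x \<in> r `` {g}" by simp
    qed
    show "r `` {g} \<subseteq> r `` S" using gS by (intro Image_mono) auto
  qed
  also have "\<dots> = r `` {p}" using g E by (metis equiv_class_eq_iff)
  finally show ?thesis .
qed

lemma loc_add_class: assumes M: "prime_ideal M" and p: "p \<in> UNIV \<times> - M" and q: "q \<in> UNIV \<times> - M"
  shows "loc_add M (loc_rel M `` {p}) (loc_rel M `` {q}) = loc_rel M `` {addp p q}"
proof -
  have E: "equiv (UNIV \<times> (- M)) (loc_rel M)" by (rule loc_equiv[OF M])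
  have pp: "(p, p) \<in> loc_rel M" "(q, q) \<in> loc_rel M" using E p q unfolding equiv_def refl_on_def by auto
  let ?S = "{(a * t + b * s, s * t) | a s b t. (a, s) \<in> loc_rel M `` {p} \<and> (b, t) \<in> loc_rel M `` {q}}"
  have S1: "\<exists>p' q'. z = addp p' q' \<and> (p, p') \<in> loc_rel M \<and> (q, q') \<in> loc_rel M" if "z \<in> ?S" for z
  proof -
    from that obtain a s b t where "z = (a * t + b * s, s * t)" "(p, (a, s)) \<in> loc_rel M" "(q, (b, t)) \<in> loc_rel M" by blast
    then show ?thesis unfolding addp_def by (intro exI[of _ "(a, s)"] exI[of _ "(b, t)"]) simp
  qed
  have S2: "addp p q \<in> ?S"
  proof -
    obtain a s b t where e: "p = (a, s)" "q = (b, t)" by (metis prod.exhaust)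
    have "(a, s) \<in> loc_rel M `` {(a, s)}" "(b, t) \<in> loc_rel M `` {(b, t)}" using pp e by auto
    then show ?thesis unfolding e addp_def fst_conv snd_conv by blast
  qed
  have ap: "addp p q \<in> UNIV \<times> - M" using p q prime_notin_mult[OF M] unfolding addp_def by auto
  show ?thesis unfolding loc_add_def
  proof (rule class_eq_gen[OF E ap, where g = "addp p q"])
    fix z assume "z \<in> ?S"
    from S1[OF this] obtain p' q' where "z = addp p' q'" "(p, p') \<in> loc_rel M" "(q, q') \<in> loc_rel M" by blast
    then show "(addp p q, z) \<in> loc_rel M" using addp_compat[OF M] by simp
  next
    show "addp p q \<in> ?S" by (rule S2)
    show "(addp p q, addp p q) \<in> loc_rel M" using E ap unfolding equiv_def refl_on_def by auto
  qed
qed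

lemma loc_mult_class: assumes M: "prime_ideal M" and p: "p \<in> UNIV \<times> - M" and q: "q \<in> UNIV \<times> - M"
  shows "loc_mult M (loc_rel M `` {p}) (loc_rel M `` {q}) = loc_rel M `` {mulp p q}"
proof -
  have E: "equiv (UNIV \<times> (- M)) (loc_rel M)" by (rule loc_equiv[OF M])
  have pp: "(p, p) \<in> loc_rel M" "(q, q) \<in> loc_rel M" using E p q unfolding equiv_def refl_on_def by auto
  let ?S = "{(a * b, s * t) | a s b t. (a, s) \<in> loc_rel M `` {p} \<and> (b, t) \<in> loc_rel M `` {q}}"
  have S1: "\<exists>p' q'. z = mulp p' q' \<and> (p, p') \<in> loc_rel M \<and> (q, q') \<in> loc_rel M" if "z \<in> ?S" for z
  proof -
    from that obtain a s b t where "z = (a * b, s * t)" "(p, (a, s)) \<in> loc_rel M" "(q, (b, t)) \<in> loc_rel M" by blast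
    then show ?thesis unfolding mulp_def by (intro exI[of _ "(a, s)"] exI[of _ "(b, t)"]) simp
  qed
  have S2: "mulp p q \<in> ?S"
  proof -
    obtain a s b t where e: "p = (a, s)" "q = (b, t)" by (metis prod.exhaust)
    have "(a, s) \<in> loc_rel M `` {(a, s)}" "(b, t) \<in> loc_rel M `` {(b, t)}" using pp e by auto
    then show ?thesis unfolding e mulp_def fst_conv snd_conv by blast
  qed
  have ap: "mulp p q \<in> UNIV \<times> - M" using p q prime_notin_mult[OF M] unfolding mulp_def by auto
  show ?thesis unfolding loc_mult_def
  proof (rule class_eq_gen[OF E ap, where g = "mulp p q"])
    fix z assume "z \<in> ?S"
    from S1[OF this] obtain p' q' where "z = mulp p' q'" "(p, p') \<in> loc_rel M" "(q, q') \<in> loc_rel M" by blast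
    then show "(mulp p q, z) \<in> loc_rel M" using mulp_compat[OF M] by simp
  next
    show "mulp p q \<in> ?S" by (rule S2)
    show "(mulp p q, mulp p q) \<in> loc_rel M" using E ap unfolding equiv_def refl_on_def by auto
  qed
qed

definition Pa :: "'a::comm_ring_1 set \<Rightarrow> 'a \<Rightarrow> 'a \<times> 'a \<Rightarrow> bool" where
  "Pa M a z \<longleftrightarrow> (\<exists>u c. u \<notin> M \<and> u * fst z = c * a)"

lemma Pa_inv: assumes M: "prime_ideal M" and "Pa M a w" "(w, z) \<in> loc_rel M" shows "Pa M a z"
proof -
  obtain x s x' s' where wz: "w = (x, s)" "z = (x', s')" by (metis prod.exhaust)
  obtain v where h: "s \<notin> M" "s' \<notin> M" "v \<notin> M" "v * (x * s' - x' * s) = 0"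
    using assms(3) unfolding wz loc_rel_def by auto
  obtain u c where uc: "u \<notin> M" "u * x = c * a" using assms(2) unfolding Pa_def wz by auto
  have "(u * v * s) * x' = (v * s' * c) * a"
  proof -
    have "v * x' * s = v * x * s'" using h(4) by (simp add: algebra_simps)
    then have "(u * v * s) * x' = (v * s') * (u * x)" by (metis mult.assoc mult.commute)
    then show ?thesis using uc by (simp add: algebra_simps)
  qed
  moreover have "u * v * s \<notin> M" using prime_notin_mult[OF M] h uc by auto
  ultimately show ?thesis unfolding Pa_def wz by auto
qed

definition Ia :: "'a::comm_ring_1 set \<Rightarrow> 'a \<Rightarrow> ('a \<times> 'a) set set" where
  "Ia M a = {X \<in> loc_carrier M. \<forall>z\<in>X. Pa M a z}"

lemma Pa_class: "prime_ideal M \<Longrightarrow> Pa M a p \<Longrightarrow> z \<in> loc_rel M `` {p} \<Longrightarrow> Pa M a z"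
  using Pa_inv by blast

lemma class_in: "p \<in> UNIV \<times> - M \<Longrightarrow> loc_rel M `` {p} \<in> loc_carrier M"
  unfolding loc_carrier_def by (rule quotientI)

lemma Ia_ideal: assumes M: "prime_ideal M" shows "loc_ideal M (Ia M a)"
  unfolding loc_ideal_def
proof (intro conjI ballI)
  have E: "equiv (UNIV \<times> (- M)) (loc_rel M)" by (rule loc_equiv[OF M])
  have refl: "(p, p) \<in> loc_rel M" if "p \<in> UNIV \<times> - M" for p
    using E that unfolding equiv_def refl_on_def by auto
  have getc: "\<exists>p. p \<in> UNIV \<times> - M \<and> X = loc_rel M `` {p}" if "X \<in> loc_carrier M" for X
    using that unfolding loc_carrier_def by (auto elim!: quotientE)
  show "Ia M a \<subseteq> loc_carrier M" unfolding Ia_def by auto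
  have z: "(0, 1) \<in> UNIV \<times> - M" using prime_one[OF M] by auto
  have "Pa M a (0, 1)" unfolding Pa_def using prime_one[OF M] by (intro exI[of _ 1] exI[of _ 0]) simp
  then show "loc_zero M \<in> Ia M a" unfolding Ia_def loc_zero_def using class_in[OF z] Pa_class[OF M] by blast
next
  fix X Y assume X: "X \<in> Ia M a" and Y: "Y \<in> Ia M a"
  obtain p q where p: "p \<in> UNIV \<times> - M" "X = loc_rel M `` {p}" and q: "q \<in> UNIV \<times> - M" "Y = loc_rel M `` {q}"
    using X Y unfolding Ia_def loc_carrier_def by (auto elim!: quotientE)
  have "(p, p) \<in> loc_rel M" "(q, q) \<in> loc_rel M" using loc_equiv[OF M] p q unfolding equiv_def refl_on_def by auto
  then have "Pa M a p" "Pa M a q" using X Y p q unfolding Ia_def by auto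
  then obtain u1 c1 u2 c2 where h: "u1 \<notin> M" "u1 * fst p = c1 * a" "u2 \<notin> M" "u2 * fst q = c2 * a"
    unfolding Pa_def by auto
  have "(u1 * u2) * fst (addp p q) = (u2 * snd q) * (u1 * fst p) + (u1 * snd p) * (u2 * fst q)"
    unfolding addp_def by (simp add: algebra_simps)
  also have "\<dots> = (u2 * snd q * c1 + u1 * snd p * c2) * a"
    unfolding h(2) h(4) by (simp add: algebra_simps)
  finally have "(u1 * u2) * fst (addp p q) = (u2 * snd q * c1 + u1 * snd p * c2) * a" .
  then have "Pa M a (addp p q)" unfolding Pa_def using h prime_notin_mult[OF M] by blast
  moreover have ap: "addp p q \<in> UNIV \<times> - M" using p q prime_notin_mult[OF M] unfolding addp_def by auto
  ultimately show "loc_add M X Y \<in> Ia M a" unfolding p(2) q(2) loc_add_class[OF M p(1) q(1)] Ia_def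
    using class_in[OF ap] Pa_class[OF M] by blast
next
  fix X Y assume X: "X \<in> loc_carrier M" and Y: "Y \<in> Ia M a"
  obtain p q where p: "p \<in> UNIV \<times> - M" "X = loc_rel M `` {p}" and q: "q \<in> UNIV \<times> - M" "Y = loc_rel M `` {q}"
    using X Y unfolding Ia_def loc_carrier_def by (auto elim!: quotientE)
  have "(q, q) \<in> loc_rel M" using loc_equiv[OF M] q unfolding equiv_def refl_on_def by auto
  then have "Pa M a q" using Y q unfolding Ia_def by auto
  then obtain u2 c2 where h: "u2 \<notin> M" "u2 * fst q = c2 * a"
    unfolding Pa_def by auto
  have "u2 * fst (mulp p q) = fst p * (u2 * fst q)"
    unfolding mulp_def by (simp add: algebra_simps)
  also have "\<dots> = (fst p * c2) * a" unfolding h(2) by (simp add: algebra_simps)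
  finally have "u2 * fst (mulp p q) = (fst p * c2) * a" .
  then have "Pa M a (mulp p q)" unfolding Pa_def using h by blast
  moreover have ap: "mulp p q \<in> UNIV \<times> - M" using p q prime_notin_mult[OF M] unfolding mulp_def by auto
  ultimately show "loc_mult M X Y \<in> Ia M a" unfolding p(2) q(2) loc_mult_class[OF M p(1) q(1)] Ia_def
    using class_in[OF ap] Pa_class[OF M] by blast
qed

lemma loc_comp:
  assumes AR: "arithmetic_ring TYPE('a::comm_ring_1)" and MM: "maximal_ideal (M::'a set)"
  shows "(\<exists>u c. u \<notin> M \<and> u * a = c * b) \<or> (\<exists>u c. u \<notin> M \<and> u * b = c * a)"
proof -
  have M: "prime_ideal M" by (rule max_prime[OF MM])
  have V: "loc_valuation M" using AR MM unfolding arithmetic_ring_def by blast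
  have mem: "loc_rel M `` {(x, 1)} \<in> Ia M x" for x
  proof -
    have x1: "(x, 1) \<in> UNIV \<times> - M" using prime_one[OF M] by auto
    have "Pa M x (x, 1)" unfolding Pa_def using prime_one[OF M] by (auto intro!: exI[of _ 1])
    then show ?thesis unfolding Ia_def using class_in[OF x1] Pa_class[OF M] by blast
  qed
  have self: "(x, 1) \<in> loc_rel M `` {(x, 1)}" for x
    using loc_equiv[OF M] prime_one[OF M] unfolding equiv_def refl_on_def by auto
  have "Ia M a \<subseteq> Ia M b \<or> Ia M b \<subseteq> Ia M a" using V Ia_ideal[OF M] unfolding loc_valuation_def by blast
  then show ?thesis
  proof
    assume "Ia M a \<subseteq> Ia M b"
    then have "Pa M b (a, 1)" using mem[of a] self[of a] unfolding Ia_def by blast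
    then show ?thesis unfolding Pa_def by auto
  next
    assume "Ia M b \<subseteq> Ia M a"
    then have "Pa M a (b, 1)" using mem[of b] self[of b] unfolding Ia_def by blast
    then show ?thesis unfolding Pa_def by auto
  qed
qed

lemma pow_shift: fixes u x :: "'a::comm_ring_1"
  assumes "u ^ k = u ^ Suc k * x" shows "u ^ (k + j) * x ^ j = u ^ k"
proof (induction j)
  case 0 then show ?case by simp
next
  case (Suc j)
  have "u ^ (k + Suc j) * x ^ Suc j = u ^ j * (u ^ Suc k * x) * x ^ j"
    by (simp add: algebra_simps power_add)
  also have "\<dots> = u ^ (k + j) * x ^ j" using assms by (simp add: algebra_simps power_add)
  finally show ?case using Suc by simp
qed

lemma pi_regular:
  assumes Z: "krull_dim_zero TYPE('a::comm_ring_1)"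
  shows "\<exists>k x. (u::'a) ^ k = u ^ Suc k * x"
proof (rule ccontr)
  assume N: "\<not> (\<exists>k x. u ^ k = u ^ Suc k * x)"
  define S where "S = {u ^ k * (1 - u * y) | k y. True}"
  have S1: "1 \<in> S" unfolding S_def by (intro CollectI exI[of _ 0] exI[of _ 0]) simp
  have Sm: "\<forall>x\<in>S. \<forall>y\<in>S. x * y \<in> S"
  proof (intro ballI)
    fix x y assume "x \<in> S" "y \<in> S"
    then obtain k y1 l y2 where xy: "x = u ^ k * (1 - u * y1)" "y = u ^ l * (1 - u * y2)" unfolding S_def by blast
    then have "x * y = u ^ (k + l) * (1 - u * (y1 + y2 - u * y1 * y2))" by (simp only: xy power_add) (simp add: algebra_simps)
    then show "x * y \<in> S" unfolding S_def by blast
  qed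
  have J: "ring_ideal {0::'a}" unfolding ring_ideal_def by simp
  have JS: "{0} \<inter> S = {}"
  proof -
    have "0 \<notin> S"
    proof
      assume "0 \<in> S"
      then obtain k y where "0 = u ^ k * (1 - u * y)" unfolding S_def by blast
      then have "u ^ k = u ^ Suc k * y" by (simp add: algebra_simps)
      then show False using N by blast
    qed
    then show ?thesis by auto
  qed
  obtain P where P: "prime_ideal P" "P \<inter> S = {}" using exists_prime[OF J S1 Sm JS] by blast
  have MP: "maximal_ideal P" using Z P unfolding krull_dim_zero_def by blast
  have I: "ring_ideal P" using P unfolding prime_ideal_def by blast
  have uS: "u \<in> S" unfolding S_def by (intro CollectI exI[of _ 1] exI[of _ 0]) simp
  then have uP: "u \<notin> P" using P by blast
  have "ext_ideal P u = UNIV" using MP ext_ideal[OF I, of u] uP unfolding maximal_ideal_def by blast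
  then have "1 \<in> ext_ideal P u" by simp
  then obtain p r where pr: "1 = p + r * u" "p \<in> P" unfolding ext_ideal_def by blast
  have "p = u ^ 0 * (1 - u * r)" using pr by (simp add: algebra_simps)
  then have "p \<in> S" unfolding S_def by blast
  then show False using pr P by blast
qed

lemma pi_idem:
  assumes Z: "krull_dim_zero TYPE('a::comm_ring_1)"
  shows "\<exists>f w n. f * f = f \<and> (u::'a) * w = f \<and> ((1 - f) * u) ^ n = 0"
proof -
  obtain k x where kx: "u ^ k = u ^ Suc k * x" using pi_regular[OF Z] by blast
  define f where "f = u ^ k * x ^ k"
  have sh: "u ^ (k + j) * x ^ j = u ^ k" for j using pow_shift[OF kx] .
  have ff: "f * f = f"
  proof -
    have "f * f = (u ^ (k + k) * x ^ k) * x ^ k" unfolding f_def by (simp add: algebra_simps power_add)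
    also have "\<dots> = f" unfolding sh f_def ..
    finally show ?thesis .
  qed
  have uw: "u * (x * f) = f"
  proof -
    have "u * (x * f) = (u ^ Suc k * x) * x ^ k" unfolding f_def by (simp add: algebra_simps)
    also have "\<dots> = f" unfolding kx[symmetric] f_def ..
    finally show ?thesis .
  qed
  have ff': "(1 - f) * (1 - f) = 1 - f" using ff by (simp add: algebra_simps)
  have idp: "(1 - f) ^ Suc j = 1 - f" for j
  proof (induction j)
    case 0 then show ?case by simp
  next
    case (Suc j)
    have "(1 - f) ^ Suc (Suc j) = (1 - f) * (1 - f) ^ Suc j" by simp
    also have "\<dots> = 1 - f" unfolding Suc ff' ..
    finally show ?case .
  qed
  have "u ^ Suc k * f = u ^ Suc k"
  proof -
    have "u ^ Suc k * f = u * (u ^ (k + k) * x ^ k)" unfolding f_def by (simp add: algebra_simps power_add)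
    also have "\<dots> = u ^ Suc k" unfolding sh by simp
    finally show ?thesis .
  qed
  then have "((1 - f) * u) ^ Suc k = 0"
    unfolding power_mult_distrib idp by (simp add: algebra_simps)
  then show ?thesis using ff uw by blast
qed

lemma nil_unit: fixes z :: "'a::comm_ring_1" assumes "z ^ n = 0"
  shows "(1 - z) * (\<Sum>i<n. z ^ i) = 1"
proof -
  have "(1 - z) * (\<Sum>i<n. z ^ i) = 1 - z ^ n"
    by (simp add: one_diff_power_eq)
  then show ?thesis using assms by simp
qed

lemma idem_split:
  assumes AR: "arithmetic_ring TYPE('a::comm_ring_1)" and Z: "krull_dim_zero TYPE('a)"
  shows "\<exists>e. e * e = e \<and> (\<exists>c. e * (a::'a) = c * b) \<and> (\<exists>d. (1 - e) * b = d * a)"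
proof -
  define J where "J = {u + v | u v. (\<exists>c. u * a = c * b) \<and> (\<exists>d. v * b = d * a)}"
  have JI: "ring_ideal J" unfolding ring_ideal_def
  proof (intro conjI ballI allI)
    show "0 \<in> J" unfolding J_def by (intro CollectI exI[of _ 0] conjI) auto
  next
    fix x y assume "x \<in> J" "y \<in> J"
    then obtain u v c d u' v' c' d' where h: "x = u + v" "u * a = c * b" "v * b = d * a"
      "y = u' + v'" "u' * a = c' * b" "v' * b = d' * a" unfolding J_def by blast
    have "(u + u') * a = (c + c') * b" "(v + v') * b = (d + d') * a" using h by (simp_all add: algebra_simps)
    moreover have "x + y = (u + u') + (v + v')" using h by simp
    ultimately show "x + y \<in> J" unfolding J_def by blast
  next
    fix r x assume "x \<in> J"
    then obtain u v c d where h: "x = u + v" "u * a = c * b" "v * b = d * a" unfolding J_def by blast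
    have "(r * u) * a = (r * c) * b" "(r * v) * b = (r * d) * a" using h by (simp_all add: mult.assoc)
    moreover have "r * x = r * u + r * v" using h by (simp add: algebra_simps)
    ultimately show "r * x \<in> J" unfolding J_def by blast
  qed
  have "1 \<in> J"
  proof (rule ccontr)
    assume n1: "1 \<notin> J"
    have "\<exists>P. prime_ideal P \<and> J \<subseteq> P \<and> P \<inter> {1} = {}"
      by (rule exists_prime[OF JI]) (use n1 in auto)
    then obtain P where P: "prime_ideal P" "J \<subseteq> P" by blast
    have MP: "maximal_ideal P" using Z P unfolding krull_dim_zero_def by blast
    from loc_comp[OF AR MP, of a b] show False
    proof
      assume "\<exists>u c. u \<notin> P \<and> u * a = c * b"
      then obtain u c where "u \<notin> P" "u * a = c * b" by blast
      moreover have "0 * b = 0 * a" by simp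
      ultimately have "u + 0 \<in> J" unfolding J_def by blast
      then show False using P \<open>u \<notin> P\<close> by auto
    next
      assume "\<exists>u c. u \<notin> P \<and> u * b = c * a"
      then obtain u c where "u \<notin> P" "u * b = c * a" by blast
      moreover have "0 * a = 0 * b" by simp
      ultimately have "0 + u \<in> J" unfolding J_def by blast
      then show False using P \<open>u \<notin> P\<close> by auto
    qed
  qed
  then obtain u v c d where h: "1 = u + v" "u * a = c * b" "v * b = d * a" unfolding J_def by blast
  obtain f w n where f: "f * f = f" "u * w = f" "((1 - f) * u) ^ n = 0" using pi_idem[OF Z] by blast
  define z where "z = (1 - f) * u"
  have zu: "(1 - z) * (\<Sum>i<n. z ^ i) = 1" using nil_unit f(3) unfolding z_def by blast
  have ff': "(1 - f) * (1 - f) = 1 - f" using f(1) by (simp add: algebra_simps)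
  have "(1 - f) * (1 - z) = (1 - f) - ((1 - f) * (1 - f)) * u" unfolding z_def by (simp add: algebra_simps)
  also have "\<dots> = (1 - f) * v" unfolding ff' using h(1) by (metis add_diff_cancel_left' right_diff_distrib mult_1_right)
  finally have fz: "(1 - f) * (1 - z) = (1 - f) * v" .
  have "(1 - f) * b = ((1 - f) * (1 - z) * (\<Sum>i<n. z ^ i)) * b"
    using zu by (simp add: mult.assoc)
  also have "\<dots> = ((1 - f) * (\<Sum>i<n. z ^ i)) * (v * b)" unfolding fz by (simp add: ac_simps)
  also have "\<dots> = ((1 - f) * (\<Sum>i<n. z ^ i) * d) * a" unfolding h(3) by (simp add: ac_simps)
  finally have e2: "(1 - f) * b = ((1 - f) * (\<Sum>i<n. z ^ i) * d) * a" .
  have "f * a = (w * c) * b" unfolding f(2)[symmetric] using h(2)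
    by (metis mult.assoc mult.commute)
  then show ?thesis using f(1) e2 by blast
qed

lemma bezout_aux:
  assumes AR: "arithmetic_ring TYPE('a::comm_ring_1)" and Z: "krull_dim_zero TYPE('a)"
  and S: "finite (S::'a set)"
  shows "\<exists>d. S \<subseteq> {r * d | r. True} \<and> (\<forall>I. ring_ideal I \<and> S \<subseteq> I \<longrightarrow> d \<in> I)"
  using S
proof (induction S rule: finite_induct)
  case empty
  show ?case by (intro exI[of _ 0]) (auto simp: ring_ideal_def)
next
  case (insert a S)
  then obtain d where d: "S \<subseteq> {r * d | r. True}" "\<forall>I. ring_ideal I \<and> S \<subseteq> I \<longrightarrow> d \<in> I" by blast
  obtain e c c' where e: "e * e = e" "e * a = c * d" "(1 - e) * d = c' * a"
    using idem_split[OF AR Z, of a d] by blast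
  define g where "g = e * d + (1 - e) * a"
  have e0: "e * (1 - e) = 0" "(1 - e) * e = 0" using e(1) by (simp_all add: algebra_simps)
  have e1: "(1 - e) * (1 - e) = 1 - e" using e(1) by (simp add: algebra_simps)
  have "(c * e + (1 - e)) * g = c * (e * e) * d + c * (e * (1 - e)) * a + ((1 - e) * e) * d + ((1 - e) * (1 - e)) * a"
    unfolding g_def by (simp add: algebra_simps)
  also have "\<dots> = e * (c * d) + (1 - e) * a" unfolding e0 e1 e(1) by (simp add: algebra_simps)
  also have "\<dots> = a" unfolding e(2)[symmetric] mult.assoc[symmetric] e(1) by (simp add: algebra_simps)
  finally have ga: "(c * e + (1 - e)) * g = a" .
  have "(e + c' * (1 - e)) * g = (e * e) * d + (e * (1 - e)) * a + c' * ((1 - e) * e) * d + c' * ((1 - e) * (1 - e)) * a"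
    unfolding g_def by (simp add: algebra_simps)
  also have "\<dots> = e * d + (1 - e) * (c' * a)" unfolding e0 e1 e(1) by (simp add: algebra_simps)
  also have "\<dots> = d" unfolding e(3)[symmetric] mult.assoc[symmetric] e1 by (simp add: algebra_simps)
  finally have gd: "(e + c' * (1 - e)) * g = d" .
  show ?case
  proof (intro exI[of _ g] conjI allI impI)
    show "insert a S \<subseteq> {r * g | r. True}"
    proof
      fix x assume "x \<in> insert a S"
      then show "x \<in> {r * g | r. True}"
      proof
        assume "x = a" then show ?thesis using ga by blast
      next
        assume "x \<in> S"
        then obtain r where "x = r * d" using d by blast
        then have "x = (r * (e + c' * (1 - e))) * g" using gd by (simp add: mult.assoc)
        then show ?thesis by blast
      qed
    qed
  next
    fix I assume I: "ring_ideal I \<and> insert a S \<subseteq> I"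
    then have "d \<in> I" "a \<in> I" using d by auto
    then show "g \<in> I" unfolding g_def using I unfolding ring_ideal_def by blast
  qed
qed

lemma bezout:
  assumes AR: "arithmetic_ring TYPE('a::comm_ring_1)" and Z: "krull_dim_zero TYPE('a)"
  shows "bezout_ring TYPE('a)"
  unfolding bezout_ring_def
proof (intro allI impI)
  fix S :: "'a set" assume "finite S"
  then obtain d where d: "S \<subseteq> {r * d | r. True}" "\<forall>I. ring_ideal I \<and> S \<subseteq> I \<longrightarrow> d \<in> I"
    using bezout_aux[OF AR Z] by blast
  have Rd: "ring_ideal {r * d | r. True}" unfolding ring_ideal_def
  proof (intro conjI ballI allI)
    show "0 \<in> {r * d |r. True}" by (intro CollectI exI[of _ 0]) simp
    fix x y assume "x \<in> {r * d |r. True}" "y \<in> {r * d |r. True}"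
    then obtain r s where "x = r * d" "y = s * d" by blast
    then have "x + y = (r + s) * d" by (simp add: algebra_simps)
    then show "x + y \<in> {r * d |r. True}" by blast
  next
    fix t x assume "x \<in> {r * d |r. True}"
    then obtain r where "x = r * d" by blast
    then have "t * x = (t * r) * d" by (simp add: algebra_simps)
    then show "t * x \<in> {r * d |r. True}" by blast
  qed
  have "ideal_generated S = {r * d | r. True}"
  proof
    show "ideal_generated S \<subseteq> {r * d | r. True}" unfolding ideal_generated_def using Rd d(1) by blast
    show "{r * d | r. True} \<subseteq> ideal_generated S" unfolding ideal_generated_def
    proof (intro subsetI InterI)
      fix x X assume "x \<in> {r * d | r. True}" "X \<in> {I. ring_ideal I \<and> S \<subseteq> I}"
      then obtain r where "x = r * d" "ring_ideal X" "S \<subseteq> X" by blast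
      then show "x \<in> X" using d(2) unfolding ring_ideal_def by blast
    qed
  qed
  then show "\<exists>a. ideal_generated S = {r * a | r. True}" by blast
qed

lemma adequate:
  assumes AR: "arithmetic_ring TYPE('a::comm_ring_1)" and Z: "krull_dim_zero TYPE('a)"
  shows "adequate_ring TYPE('a)"
  unfolding adequate_ring_def
proof (intro conjI allI impI)
  show "bezout_ring TYPE('a)" by (rule bezout[OF AR Z])
  fix a b :: 'a
  obtain f w n where f: "f * f = f" "b * w = f" "((1 - f) * b) ^ n = 0" using pi_idem[OF Z] by blast
  have e0: "f * (1 - f) = 0" "(1 - f) * f = 0" using f(1) by (simp_all add: algebra_simps)
  have e1: "(1 - f) * (1 - f) = 1 - f" using f(1) by (simp add: algebra_simps)
  define r where "r = f * a + (1 - f)"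
  define s where "s = f + (1 - f) * a"
  have "r * s = (f * f) * a + (f * (1 - f)) * (a * a) + (1 - f) * f + ((1 - f) * (1 - f)) * a"
    unfolding r_def s_def by (simp add: algebra_simps)
  also have "\<dots> = a" unfolding e0 e1 f(1) by (simp add: algebra_simps)
  finally have rs: "a = r * s" by simp
  have "(1 - f) * r = 1 - f"
  proof -
    have "(1 - f) * r = ((1 - f) * f) * a + (1 - f) * (1 - f)" unfolding r_def by (simp add: algebra_simps)
    then show ?thesis unfolding e0 e1 by simp
  qed
  then have "(1 - f) * r + w * b = 1" using f(2) by (simp add: algebra_simps)
  then have U: "{x * r + y * b | x y. True} = UNIV"
  proof -
    assume h: "(1 - f) * r + w * b = 1"
    have "z \<in> {x * r + y * b | x y. True}" for z
    proof -
      have "z = (z * (1 - f)) * r + (z * w) * b" using h by (metis mult.assoc distrib_left mult_1_right)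
      then show ?thesis by blast
    qed
    then show ?thesis by blast
  qed
  have N: "{x * s' + y * b | x y. True} \<noteq> UNIV" if s': "s' dvd s" "\<not> s' dvd 1" for s'
  proof
    assume "{x * s' + y * b | x y. True} = UNIV"
    then have "1 \<in> {x * s' + y * b | x y. True}" by simp
    then obtain x y where xy: "1 = x * s' + y * b" by blast
    obtain t where t: "s = s' * t" using s'(1) by (auto elim: dvdE)
    have fs: "f * s = f" unfolding s_def using e0 f(1) by (simp add: algebra_simps)
    define Zz where "Zz = (1 - f) * y * b"
    have "Zz = ((1 - f) * b) * y" unfolding Zz_def by (simp add: ac_simps)
    then have "Zz ^ n = ((1 - f) * b) ^ n * y ^ n" by (simp only: power_mult_distrib)
    then have "Zz ^ n = 0" using f(3) by simp
    then have zu: "(1 - Zz) * (\<Sum>i<n. Zz ^ i) = 1" by (rule nil_unit)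
    have "(1 - f) * (1 - Zz) = (1 - f) - ((1 - f) * (1 - f)) * y * b" unfolding Zz_def by (simp add: algebra_simps)
    also have "\<dots> = (1 - f) * (x * s' + y * b) - (1 - f) * y * b" unfolding e1 xy[symmetric] by simp
    also have "\<dots> = (1 - f) * x * s'" by (simp add: algebra_simps)
    finally have fz: "(1 - f) * (1 - Zz) = (1 - f) * x * s'" .
    have A: "f = s' * (t * f)"
    proof -
      have "f = f * (s' * t)" using fs t by simp
      then show ?thesis by (metis mult.commute mult.left_commute)
    qed
    have "1 - f = (1 - f) * (1 - Zz) * (\<Sum>i<n. Zz ^ i)" using zu by (simp add: mult.assoc)
    also have "\<dots> = s' * ((1 - f) * x * (\<Sum>i<n. Zz ^ i))" unfolding fz by (simp add: algebra_simps)
    finally have B: "1 - f = s' * ((1 - f) * x * (\<Sum>i<n. Zz ^ i))" .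
    have "f + (1 - f) = s' * (t * f) + s' * ((1 - f) * x * (\<Sum>i<n. Zz ^ i))"
      using A B by (rule arg_cong2)
    then have "1 = s' * (t * f + (1 - f) * x * (\<Sum>i<n. Zz ^ i))" by (simp add: distrib_left)
    then have "s' dvd 1" by (rule dvdI)
    then show False using s'(2) by blast
  qed
  show "\<exists>r s. a = r * s \<and> {x * r + y * b | x y. True} = UNIV \<and>
           (\<forall>s'. s' dvd s \<and> \<not> s' dvd 1 \<longrightarrow> {x * s' + y * b | x y. True} \<noteq> UNIV)"
    using rs U N by blast
qed

definition ipair :: "'a::comm_ring_1 mat \<Rightarrow> 'a mat \<Rightarrow> nat \<Rightarrow> bool" where
  "ipair X Y n \<longleftrightarrow> X \<in> carrier_mat n n \<and> Y \<in> carrier_mat n n \<and> X * Y = 1\<^sub>m n \<and> Y * X = 1\<^sub>m n"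

lemma ipair_inv: "ipair X Y n \<Longrightarrow> invertible_mat X"
  unfolding ipair_def invertible_mat_def inverts_mat_def square_mat.simps by auto

lemma ipair_mult: assumes "ipair X Y n" "ipair X' Y' n" shows "ipair (X * X') (Y' * Y) n"
proof -
  have c: "X \<in> carrier_mat n n" "Y \<in> carrier_mat n n" "X' \<in> carrier_mat n n" "Y' \<in> carrier_mat n n"
    using assms unfolding ipair_def by auto
  have "X * X' * (Y' * Y) = X * (X' * Y') * Y" using c by (simp add: assoc_mult_mat[of _ n n _ n _ n])
  also have "\<dots> = 1\<^sub>m n" using assms c unfolding ipair_def by simp
  finally have 1: "X * X' * (Y' * Y) = 1\<^sub>m n" .
  have "Y' * Y * (X * X') = Y' * (Y * X) * X'" using c by (simp add: assoc_mult_mat[of _ n n _ n _ n])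
  also have "\<dots> = 1\<^sub>m n" using assms c unfolding ipair_def by simp
  finally have 2: "Y' * Y * (X * X') = 1\<^sub>m n" .
  show ?thesis using 1 2 c unfolding ipair_def by simp
qed

lemma ipair_one: "ipair (1\<^sub>m n) (1\<^sub>m n) n" unfolding ipair_def by simp

lemma ipair_det: assumes A: "A \<in> carrier_mat n n" and d: "det A = 1" shows "ipair A (adj_mat A) n"
proof -
  have one: "(1::'a) \<cdot>\<^sub>m 1\<^sub>m n = 1\<^sub>m n" by (rule eq_matI) auto
  show ?thesis using adj_mat[OF A] A unfolding ipair_def d one by simp
qed

lemma ipair_swap: "i < n \<Longrightarrow> 0 < n \<Longrightarrow> ipair (swaprows_mat n 0 i) (swaprows_mat n 0 i) n"
  unfolding ipair_def using swaprows_mat_inv[of 0 n i] by simp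

lemma mult_entry: assumes "A \<in> carrier_mat a b" "B \<in> carrier_mat b c" "i < a" "j < c"
  shows "(A * B) $$ (i, j) = (\<Sum>k<b. A $$ (i, k) * B $$ (k, j))"
  using assms by (simp add: scalar_prod_def atLeast0LessThan)

lemma mix_scalar: fixes e :: "'a::comm_ring_1" assumes "e * e = e"
  shows "(e * x1 + (1 - e) * x2) * (e * y1 + (1 - e) * y2) = e * (x1 * y1) + (1 - e) * (x2 * y2)"
proof -
  have e0: "e * (1 - e) = 0" and e1: "(1 - e) * (1 - e) = 1 - e" using assms by (simp_all add: algebra_simps)
  have "(e * x1 + (1 - e) * x2) * (e * y1 + (1 - e) * y2) =
     (e * e) * (x1 * y1) + (e * (1 - e)) * (x1 * y2 + x2 * y1) + ((1 - e) * (1 - e)) * (x2 * y2)"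
    by (simp add: algebra_simps)
  then show ?thesis unfolding e0 e1 assms by simp
qed

lemma mix: fixes e :: "'a::comm_ring_1" assumes ee: "e * e = e"
  and c: "X1 \<in> carrier_mat a b" "X2 \<in> carrier_mat a b" "Y1 \<in> carrier_mat b c" "Y2 \<in> carrier_mat b c"
  shows "(e \<cdot>\<^sub>m X1 + (1 - e) \<cdot>\<^sub>m X2) * (e \<cdot>\<^sub>m Y1 + (1 - e) \<cdot>\<^sub>m Y2) = e \<cdot>\<^sub>m (X1 * Y1) + (1 - e) \<cdot>\<^sub>m (X2 * Y2)"
proof (rule eq_matI)
  fix i j assume ij: "i < dim_row (e \<cdot>\<^sub>m (X1 * Y1) + (1 - e) \<cdot>\<^sub>m (X2 * Y2))" "j < dim_col (e \<cdot>\<^sub>m (X1 * Y1) + (1 - e) \<cdot>\<^sub>m (X2 * Y2))"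
  then have i: "i < a" and j: "j < c" using c by auto
  have cX: "e \<cdot>\<^sub>m X1 + (1 - e) \<cdot>\<^sub>m X2 \<in> carrier_mat a b" and cY: "e \<cdot>\<^sub>m Y1 + (1 - e) \<cdot>\<^sub>m Y2 \<in> carrier_mat b c"
    using c by auto
  have "((e \<cdot>\<^sub>m X1 + (1 - e) \<cdot>\<^sub>m X2) * (e \<cdot>\<^sub>m Y1 + (1 - e) \<cdot>\<^sub>m Y2)) $$ (i, j)
     = (\<Sum>k<b. (e * X1 $$ (i, k) + (1 - e) * X2 $$ (i, k)) * (e * Y1 $$ (k, j) + (1 - e) * Y2 $$ (k, j)))"
    unfolding mult_entry[OF cX cY i j] using c i j by (intro sum.cong) auto
  also have "\<dots> = (\<Sum>k<b. e * (X1 $$ (i, k) * Y1 $$ (k, j)) + (1 - e) * (X2 $$ (i, k) * Y2 $$ (k, j)))"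
    unfolding mix_scalar[OF ee] ..
  also have "\<dots> = e * (X1 * Y1) $$ (i, j) + (1 - e) * (X2 * Y2) $$ (i, j)"
    unfolding mult_entry[OF c(1) c(3) i j] mult_entry[OF c(2) c(4) i j]
    by (simp add: sum.distrib sum_distrib_left)
  also have "\<dots> = (e \<cdot>\<^sub>m (X1 * Y1) + (1 - e) \<cdot>\<^sub>m (X2 * Y2)) $$ (i, j)" using c i j by simp
  finally show "((e \<cdot>\<^sub>m X1 + (1 - e) \<cdot>\<^sub>m X2) * (e \<cdot>\<^sub>m Y1 + (1 - e) \<cdot>\<^sub>m Y2)) $$ (i, j) = (e \<cdot>\<^sub>m (X1 * Y1) + (1 - e) \<cdot>\<^sub>m (X2 * Y2)) $$ (i, j)" .
qed (use c in auto)

lemma mix_same: fixes e :: "'a::comm_ring_1" assumes "A \<in> carrier_mat a b"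
  shows "e \<cdot>\<^sub>m A + (1 - e) \<cdot>\<^sub>m A = A"
  by (rule eq_matI) (use assms in \<open>auto simp: algebra_simps\<close>)

lemma ipair_mix: fixes e :: "'a::comm_ring_1" assumes ee: "e * e = e" and "ipair P P' n" "ipair S S' n"
  shows "ipair (e \<cdot>\<^sub>m P + (1 - e) \<cdot>\<^sub>m S) (e \<cdot>\<^sub>m P' + (1 - e) \<cdot>\<^sub>m S') n"
proof -
  have c: "P \<in> carrier_mat n n" "P' \<in> carrier_mat n n" "S \<in> carrier_mat n n" "S' \<in> carrier_mat n n"
    and p: "P * P' = 1\<^sub>m n" "P' * P = 1\<^sub>m n" "S * S' = 1\<^sub>m n" "S' * S = 1\<^sub>m n"
    using assms unfolding ipair_def by auto
  show ?thesis unfolding ipair_def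
    using mix[OF ee c(1) c(3) c(2) c(4)] mix[OF ee c(2) c(4) c(1) c(3)] p c
      mix_same[of "1\<^sub>m n" n n e] by simp
qed

lemma dvd_left: fixes A :: "'a::comm_ring_1 mat" assumes A: "A \<in> carrier_mat a b" and X: "X \<in> carrier_mat c a"
  and d: "\<forall>i<a. \<forall>k<b. d dvd A $$ (i, k)" shows "\<forall>i<c. \<forall>k<b. d dvd (X * A) $$ (i, k)"
proof (intro allI impI)
  fix i k assume ik: "i < c" "k < b"
  show "d dvd (X * A) $$ (i, k)" unfolding mult_entry[OF X A ik]
  proof (intro dvd_sum)
    fix l assume "l \<in> {..<a}"
    then have "d dvd A $$ (l, k)" using d \<open>k < b\<close> by auto
    then show "d dvd X $$ (i, l) * A $$ (l, k)" by (rule dvd_mult)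
  qed
qed

lemma dvd_right: fixes A :: "'a::comm_ring_1 mat" assumes A: "A \<in> carrier_mat a b" and X: "X \<in> carrier_mat b c"
  and d: "\<forall>i<a. \<forall>k<b. d dvd A $$ (i, k)" shows "\<forall>i<a. \<forall>k<c. d dvd (A * X) $$ (i, k)"
proof (intro allI impI)
  fix i k assume ik: "i < a" "k < c"
  show "d dvd (A * X) $$ (i, k)" unfolding mult_entry[OF A X ik]
  proof (intro dvd_sum)
    fix l assume "l \<in> {..<b}"
    then have "d dvd A $$ (i, l)" using d \<open>i < a\<close> by auto
    then show "d dvd A $$ (i, l) * X $$ (l, k)" by (rule dvd_mult2)
  qed
qed

lemma swap_entry: assumes A: "A \<in> carrier_mat m n" and i: "i < m" and j: "j < n" and m: "0 < m" and n: "0 < n"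
  shows "(swaprows_mat m 0 i * A * swaprows_mat n 0 j) $$ (0, 0) = A $$ (i, j)"
proof -
  have "swaprows_mat m 0 i * A = swaprows 0 i A" using swaprows_mat[OF A m i] by simp
  moreover have "swaprows 0 i A * swaprows_mat n 0 j = swapcols 0 j (swaprows 0 i A)"
    using swapcols_mat[of "swaprows 0 i A" m n 0 j] A n j by simp
  ultimately show ?thesis using A i j m n by simp
qed

lemma gcd_idem: fixes e :: "'a::comm_ring_1"
  assumes e: "e * e = e" "e * a = c * d" "(1 - e) * d = c' * a"
  shows "(c * e + (1 - e)) * (e * d + (1 - e) * a) = a" "(e + c' * (1 - e)) * (e * d + (1 - e) * a) = d"
proof -
  define g where "g = e * d + (1 - e) * a"
  have e0: "e * (1 - e) = 0" "(1 - e) * e = 0" using e(1) by (simp_all add: algebra_simps)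
  have e1: "(1 - e) * (1 - e) = 1 - e" using e(1) by (simp add: algebra_simps)
  have "(c * e + (1 - e)) * g = c * (e * e) * d + c * (e * (1 - e)) * a + ((1 - e) * e) * d + ((1 - e) * (1 - e)) * a"
    unfolding g_def by (simp add: algebra_simps)
  also have "\<dots> = e * (c * d) + (1 - e) * a" unfolding e0 e1 e(1) by (simp add: algebra_simps)
  also have "\<dots> = a" unfolding e(2)[symmetric] mult.assoc[symmetric] e(1) by (simp add: algebra_simps)
  finally show "(c * e + (1 - e)) * (e * d + (1 - e) * a) = a" unfolding g_def .
  have "(e + c' * (1 - e)) * g = (e * e) * d + (e * (1 - e)) * a + c' * ((1 - e) * e) * d + c' * ((1 - e) * (1 - e)) * a"
    unfolding g_def by (simp add: algebra_simps)
  also have "\<dots> = e * d + (1 - e) * (c' * a)" unfolding e0 e1 e(1) by (simp add: algebra_simps)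
  also have "\<dots> = d" unfolding e(3)[symmetric] mult.assoc[symmetric] e1 by (simp add: algebra_simps)
  finally show "(e + c' * (1 - e)) * (e * d + (1 - e) * a) = d" unfolding g_def .
qed

lemma pivot:
  assumes AR: "arithmetic_ring TYPE('a::comm_ring_1)" and Z: "krull_dim_zero TYPE('a)"
  and A: "(A::'a mat) \<in> carrier_mat m n" and m: "0 < m" and n: "0 < n"
  shows "\<exists>P P' Q Q'. ipair P P' m \<and> ipair Q Q' n \<and> (\<forall>i<m. \<forall>j<n. (P * A * Q) $$ (0, 0) dvd A $$ (i, j))"
proof -
  have gen: "finite T \<Longrightarrow> T \<subseteq> {..<m} \<times> {..<n} \<Longrightarrow>
    \<exists>P P' Q Q'. ipair P P' m \<and> ipair Q Q' n \<and> (\<forall>t\<in>T. (P * A * Q) $$ (0, 0) dvd A $$ t)" for T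
  proof (induction T rule: finite_induct)
    case empty
    show ?case using ipair_one by blast
  next
    case (insert t T)
    then obtain P P' Q Q' where PQ: "ipair P P' m" "ipair Q Q' n" "\<forall>t\<in>T. (P * A * Q) $$ (0, 0) dvd A $$ t"
      by auto
    obtain i j where t: "t = (i, j)" by (metis prod.exhaust)
    have i: "i < m" and j: "j < n" using insert(4) t by auto
    define d where "d = (P * A * Q) $$ (0, 0)"
    define b where "b = A $$ (i, j)"
    obtain e c c' where e: "e * e = e" "e * b = c * d" "(1 - e) * d = c' * b"
      using idem_split[OF AR Z, of b d] by blast
    define g where "g = e * d + (1 - e) * b"
    have gb: "g dvd b" using gcd_idem(1)[OF e] unfolding g_def by (metis dvd_triv_right)
    have gd: "g dvd d" using gcd_idem(2)[OF e] unfolding g_def by (metis dvd_triv_right)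
    define S where "S = (swaprows_mat m 0 i :: 'a mat)"
    define T' where "T' = (swaprows_mat n 0 j :: 'a mat)"
    have iS: "ipair S S m" unfolding S_def by (rule ipair_swap[OF i m])
    have iT: "ipair T' T' n" unfolding T'_def by (rule ipair_swap[OF j n])
    have cP: "P \<in> carrier_mat m m" "Q \<in> carrier_mat n n" "S \<in> carrier_mat m m" "T' \<in> carrier_mat n n"
      using PQ iS iT unfolding ipair_def by auto
    define P2 where "P2 = e \<cdot>\<^sub>m P + (1 - e) \<cdot>\<^sub>m S"
    define Q2 where "Q2 = e \<cdot>\<^sub>m Q + (1 - e) \<cdot>\<^sub>m T'"
    have i1: "ipair P2 (e \<cdot>\<^sub>m P' + (1 - e) \<cdot>\<^sub>m S) m" unfolding P2_def by (rule ipair_mix[OF e(1) PQ(1) iS])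
    have i2: "ipair Q2 (e \<cdot>\<^sub>m Q' + (1 - e) \<cdot>\<^sub>m T') n" unfolding Q2_def by (rule ipair_mix[OF e(1) PQ(2) iT])
    have "P2 * A = e \<cdot>\<^sub>m (P * A) + (1 - e) \<cdot>\<^sub>m (S * A)"
      unfolding P2_def using mix[OF e(1) cP(1) cP(3) A A] mix_same[OF A, of e] by simp
    then have "P2 * A * Q2 = e \<cdot>\<^sub>m (P * A * Q) + (1 - e) \<cdot>\<^sub>m (S * A * T')"
      unfolding Q2_def using mix[OF e(1) _ _ cP(2) cP(4), of "P * A" m "S * A"] cP A by simp
    then have "(P2 * A * Q2) $$ (0, 0) = e * d + (1 - e) * (S * A * T') $$ (0, 0)"
      unfolding d_def using cP A m n by simp
    also have "(S * A * T') $$ (0, 0) = b" unfolding S_def T'_def b_def by (rule swap_entry[OF A i j m n])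
    finally have g: "(P2 * A * Q2) $$ (0, 0) = g" unfolding g_def .
    have "\<forall>s\<in>insert t T. (P2 * A * Q2) $$ (0, 0) dvd A $$ s"
    proof
      fix s assume "s \<in> insert t T"
      then show "(P2 * A * Q2) $$ (0, 0) dvd A $$ s"
      proof
        assume "s = t" then show ?thesis using gb g t b_def by simp
      next
        assume "s \<in> T" then have "d dvd A $$ s" using PQ(3) d_def by auto
        then show ?thesis using gd g dvd_trans by metis
      qed
    qed
    then show ?case using i1 i2 by blast
  qed
  obtain P P' Q Q' where PQ: "ipair P P' m" "ipair Q Q' n" "\<forall>t\<in>{..<m} \<times> {..<n}. (P * A * Q) $$ (0, 0) dvd A $$ t"
    using gen[of "{..<m} \<times> {..<n}"] by auto
  then show ?thesis by blast
qed

lemma sum_two: fixes f :: "nat \<Rightarrow> 'a::comm_ring_1"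
  assumes "i < M"
  shows "(\<Sum>k<M. ((if i = k then 1 else 0) - (if k = 0 then x else 0)) * f k) = f i - x * f 0"
proof -
  have M: "0 < M" using assms by simp
  have "(\<Sum>k<M. ((if i = k then 1 else 0) - (if k = 0 then x else 0)) * f k)
     = (\<Sum>k<M. (if i = k then f k else 0)) - (\<Sum>k<M. (if k = 0 then x * f k else 0))"
    unfolding sum_subtractf[symmetric] by (intro sum.cong) (auto simp: algebra_simps)
  also have "\<dots> = f i - x * f 0" using assms M by simp
  finally show ?thesis .
qed

lemma clear:
  fixes B :: "'a::comm_ring_1 mat"
  assumes B: "B \<in> carrier_mat (Suc m) (Suc n)"
  and dv: "\<forall>i<Suc m. \<forall>j<Suc n. B $$ (0, 0) dvd B $$ (i, j)"
  shows "\<exists>L L' U U'. ipair L L' (Suc m) \<and> ipair U U' (Suc n) \<and> (L * B * U) $$ (0, 0) = B $$ (0, 0)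
     \<and> (\<forall>i. 0 < i \<and> i < Suc m \<longrightarrow> (L * B * U) $$ (i, 0) = 0)
     \<and> (\<forall>j. 0 < j \<and> j < Suc n \<longrightarrow> (L * B * U) $$ (0, j) = 0)"
proof -
  define d where "d = B $$ (0, 0)"
  have "\<forall>i. \<exists>k. i < Suc m \<longrightarrow> B $$ (i, 0) = d * k" using dv unfolding d_def by (metis dvdE zero_less_Suc)
  then obtain c where c: "\<And>i. i < Suc m \<Longrightarrow> B $$ (i, 0) = d * c i" by metis
  have "\<forall>j. \<exists>k. j < Suc n \<longrightarrow> B $$ (0, j) = d * k" using dv unfolding d_def by (metis dvdE zero_less_Suc)
  then obtain c' where c': "\<And>j. j < Suc n \<Longrightarrow> B $$ (0, j) = d * c' j" by metis
  define cc where "cc i = (if i = 0 then 0 else c i)" for i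
  define cc' where "cc' j = (if j = 0 then 0 else c' j)" for j
  define L :: "'a mat" where "L = mat (Suc m) (Suc m) (\<lambda>(i, k). (if i = k then 1 else 0) - (if k = 0 then cc i else 0))"
  define U :: "'a mat" where "U = mat (Suc n) (Suc n) (\<lambda>(k, j). (if k = j then 1 else 0) - (if k = 0 then cc' j else 0))"
  have cL: "L \<in> carrier_mat (Suc m) (Suc m)" and cU: "U \<in> carrier_mat (Suc n) (Suc n)" unfolding L_def U_def by auto
  have "det L = prod_list (diag_mat L)"
    by (rule det_lower_triangular[OF _ cL]) (auto simp: L_def)
  also have "\<dots> = 1" unfolding prod_list_diag_prod by (intro prod.neutral) (auto simp: L_def cc_def)
  finally have iL: "ipair L (adj_mat L) (Suc m)" by (rule ipair_det[OF cL])
  have "det U = prod_list (diag_mat U)"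
    by (rule det_upper_triangular[OF _ cU]) (auto simp: U_def upper_triangular_def)
  also have "\<dots> = 1" unfolding prod_list_diag_prod by (intro prod.neutral) (auto simp: U_def cc'_def)
  finally have iU: "ipair U (adj_mat U) (Suc n)" by (rule ipair_det[OF cU])
  have LB: "(L * B) $$ (i, j) = B $$ (i, j) - cc i * B $$ (0, j)" if "i < Suc m" "j < Suc n" for i j
  proof -
    have "(L * B) $$ (i, j) = (\<Sum>k<Suc m. ((if i = k then 1 else 0) - (if k = 0 then cc i else 0)) * B $$ (k, j))"
      unfolding mult_entry[OF cL B that] using that by (intro sum.cong) (auto simp: L_def)
    also have "\<dots> = B $$ (i, j) - cc i * B $$ (0, j)" by (rule sum_two[OF that(1)])
    finally show ?thesis .
  qed
  have cLB: "L * B \<in> carrier_mat (Suc m) (Suc n)" using cL B by simp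
  have LBU: "(L * B * U) $$ (i, j) = (L * B) $$ (i, j) - cc' j * (L * B) $$ (i, 0)" if "i < Suc m" "j < Suc n" for i j
  proof -
    have "(L * B * U) $$ (i, j) = (\<Sum>k<Suc n. ((if j = k then 1 else 0) - (if k = 0 then cc' j else 0)) * (L * B) $$ (i, k))"
      unfolding mult_entry[OF cLB cU that] using that by (intro sum.cong) (auto simp: U_def mult.commute)
    also have "\<dots> = (L * B) $$ (i, j) - cc' j * (L * B) $$ (i, 0)" by (rule sum_two[OF that(2)])
    finally show ?thesis .
  qed
  have r1: "(L * B * U) $$ (0, 0) = B $$ (0, 0)" using LBU[of 0 0] LB[of 0 0] by (simp add: cc_def cc'_def)
  have r2: "(L * B * U) $$ (i, 0) = 0" if "0 < i" "i < Suc m" for i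
  proof -
    have "(L * B * U) $$ (i, 0) = B $$ (i, 0) - c i * B $$ (0, 0)"
      using LBU[of i 0] LB[of i 0] that by (simp add: cc_def cc'_def)
    also have "\<dots> = 0" using c[OF that(2)] unfolding d_def by (simp add: mult.commute)
    finally show ?thesis .
  qed
  have r3: "(L * B * U) $$ (0, j) = 0" if "0 < j" "j < Suc n" for j
  proof -
    have "(L * B * U) $$ (0, j) = B $$ (0, j) - c' j * B $$ (0, 0)"
      using LBU[of 0 j] LB[of 0 j] LB[of 0 0] that by (simp add: cc_def cc'_def)
    also have "\<dots> = 0" using c'[OF that(2)] unfolding d_def by (simp add: mult.commute)
    finally show ?thesis .
  qed
  show ?thesis using iL iU r1 r2 r3 by blast
qed

lemma block_split:
  fixes C :: "'a::comm_ring_1 mat"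
  assumes C: "C \<in> carrier_mat (Suc m) (Suc n)"
  and r2: "\<forall>i. 0 < i \<and> i < Suc m \<longrightarrow> C $$ (i, 0) = 0"
  and r3: "\<forall>j. 0 < j \<and> j < Suc n \<longrightarrow> C $$ (0, j) = 0"
  shows "C = four_block_mat (mat 1 1 (\<lambda>_. C $$ (0, 0))) (0\<^sub>m 1 n) (0\<^sub>m m 1) (mat m n (\<lambda>(i, j). C $$ (Suc i, Suc j)))"
proof (rule eq_matI)
  fix i j assume ij: "i < dim_row (four_block_mat (mat 1 1 (\<lambda>_. C $$ (0, 0))) (0\<^sub>m 1 n) (0\<^sub>m m 1) (mat m n (\<lambda>(i, j). C $$ (Suc i, Suc j))))"
    "j < dim_col (four_block_mat (mat 1 1 (\<lambda>_. C $$ (0, 0))) (0\<^sub>m 1 n) (0\<^sub>m m 1) (mat m n (\<lambda>(i, j). C $$ (Suc i, Suc j))))"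
  then have i: "i < Suc m" and j: "j < Suc n" by auto
  show "C $$ (i, j) = four_block_mat (mat 1 1 (\<lambda>_. C $$ (0, 0))) (0\<^sub>m 1 n) (0\<^sub>m m 1) (mat m n (\<lambda>(i, j). C $$ (Suc i, Suc j))) $$ (i, j)"
    using i j r2 r3 by (cases i; cases j) auto
qed (use C in auto)

lemma block_ipair: assumes "ipair P P' m" shows "ipair (four_block_mat (1\<^sub>m 1) (0\<^sub>m 1 m) (0\<^sub>m m 1) P) (four_block_mat (1\<^sub>m 1) (0\<^sub>m 1 m) (0\<^sub>m m 1) P') (Suc m)"
proof -
  have c: "P \<in> carrier_mat m m" "P' \<in> carrier_mat m m" "P * P' = 1\<^sub>m m" "P' * P = 1\<^sub>m m" using assms unfolding ipair_def by auto
  have "four_block_mat (1\<^sub>m 1) (0\<^sub>m 1 m) (0\<^sub>m m 1) P * four_block_mat (1\<^sub>m 1) (0\<^sub>m 1 m) (0\<^sub>m m 1) P'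
     = four_block_mat (1\<^sub>m 1) (0\<^sub>m 1 m) (0\<^sub>m m 1) (1\<^sub>m m)"
    using c by (subst mult_four_block_mat[of _ 1 1 _ m _ m _ _ 1 _ m]) auto
  moreover have "four_block_mat (1\<^sub>m 1) (0\<^sub>m 1 m) (0\<^sub>m m 1) P' * four_block_mat (1\<^sub>m 1) (0\<^sub>m 1 m) (0\<^sub>m m 1) P
     = four_block_mat (1\<^sub>m 1) (0\<^sub>m 1 m) (0\<^sub>m m 1) (1\<^sub>m m)"
    using c by (subst mult_four_block_mat[of _ 1 1 _ m _ m _ _ 1 _ m]) auto
  ultimately show ?thesis unfolding ipair_def using c four_block_one_mat[of 1 m] by auto
qed

lemma main_diag:
  assumes AR: "arithmetic_ring TYPE('a::comm_ring_1)" and Z: "krull_dim_zero TYPE('a)"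
  shows "\<forall>n (A::'a mat). A \<in> carrier_mat m n \<longrightarrow>
    (\<exists>P P' Q Q' D. ipair P P' m \<and> ipair Q Q' n \<and> D \<in> carrier_mat m n \<and> diagonal_rect D \<and> P * A * Q = D)"
proof (induction m)
  case 0
  show ?case
  proof (intro allI impI)
    fix n and A :: "'a mat" assume A: "A \<in> carrier_mat 0 n"
    have "1\<^sub>m 0 * A * 1\<^sub>m n = A" using A by simp
    moreover have "diagonal_rect A" using A unfolding diagonal_rect_def by auto
    ultimately show "\<exists>P P' Q Q' D. ipair P P' 0 \<and> ipair Q Q' n \<and> D \<in> carrier_mat 0 n \<and> diagonal_rect D \<and> P * A * Q = D"
      using ipair_one A by blast
  qed
next
  case (Suc m)
  show ?case
  proof (intro allI impI)
    fix n and A :: "'a mat" assume A: "A \<in> carrier_mat (Suc m) n"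
    show "\<exists>P P' Q Q' D. ipair P P' (Suc m) \<and> ipair Q Q' n \<and> D \<in> carrier_mat (Suc m) n \<and> diagonal_rect D \<and> P * A * Q = D"
    proof (cases n)
      case 0
      have "1\<^sub>m (Suc m) * A * 1\<^sub>m n = A" using A by simp
      moreover have "diagonal_rect A" using A 0 unfolding diagonal_rect_def by auto
      ultimately show ?thesis using ipair_one A by blast
    next
      case (Suc n')
      have A': "A \<in> carrier_mat (Suc m) (Suc n')" using A Suc by simp
      obtain P1 P1' Q1 Q1' where PQ1: "ipair P1 P1' (Suc m)" "ipair Q1 Q1' (Suc n')"
        "\<forall>i<Suc m. \<forall>j<Suc n'. (P1 * A * Q1) $$ (0, 0) dvd A $$ (i, j)"
        using pivot[OF AR Z A'] by blast
      define B where "B = P1 * A * Q1"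
      have cP1: "P1 \<in> carrier_mat (Suc m) (Suc m)" and cQ1: "Q1 \<in> carrier_mat (Suc n') (Suc n')"
        using PQ1 unfolding ipair_def by auto
      have cB: "B \<in> carrier_mat (Suc m) (Suc n')" unfolding B_def using cP1 cQ1 A' by simp
      have "\<forall>i<Suc m. \<forall>j<Suc n'. B $$ (0, 0) dvd (P1 * A) $$ (i, j)"
        using dvd_left[OF A' cP1] PQ1(3) unfolding B_def by blast
      then have dvB: "\<forall>i<Suc m. \<forall>j<Suc n'. B $$ (0, 0) dvd B $$ (i, j)"
        using dvd_right[of "P1 * A" "Suc m" "Suc n'" Q1 "Suc n'"] cP1 A' cQ1 unfolding B_def by simp
      obtain L L' U U' where LU: "ipair L L' (Suc m)" "ipair U U' (Suc n')"
        "(L * B * U) $$ (0, 0) = B $$ (0, 0)"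
        "\<forall>i. 0 < i \<and> i < Suc m \<longrightarrow> (L * B * U) $$ (i, 0) = 0"
        "\<forall>j. 0 < j \<and> j < Suc n' \<longrightarrow> (L * B * U) $$ (0, j) = 0"
        using clear[OF cB dvB] by blast
      define C where "C = L * B * U"
      have cL: "L \<in> carrier_mat (Suc m) (Suc m)" and cU: "U \<in> carrier_mat (Suc n') (Suc n')"
        using LU unfolding ipair_def by auto
      have cC: "C \<in> carrier_mat (Suc m) (Suc n')" unfolding C_def using cL cU cB by simp
      define C' where "C' = mat m n' (\<lambda>(i, j). C $$ (Suc i, Suc j))"
      define d where "d = C $$ (0, 0)"
      have Csplit: "C = four_block_mat (mat 1 1 (\<lambda>_. d)) (0\<^sub>m 1 n') (0\<^sub>m m 1) C'"
        unfolding C'_def d_def by (rule block_split[OF cC]) (use LU(4,5) C_def in auto)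
      have cC': "C' \<in> carrier_mat m n'" unfolding C'_def by simp
      obtain P2 P2' Q2 Q2' D2 where PQ2: "ipair P2 P2' m" "ipair Q2 Q2' n'" "D2 \<in> carrier_mat m n'"
        "diagonal_rect D2" "P2 * C' * Q2 = D2"
        using Suc.IH cC' by blast
      have cP2: "P2 \<in> carrier_mat m m" and cQ2: "Q2 \<in> carrier_mat n' n'" using PQ2 unfolding ipair_def by auto
      define Pb where "Pb = four_block_mat (1\<^sub>m 1) (0\<^sub>m 1 m) (0\<^sub>m m 1) P2"
      define Qb where "Qb = four_block_mat (1\<^sub>m 1) (0\<^sub>m 1 n') (0\<^sub>m n' 1) Q2"
      have iPb: "ipair Pb (four_block_mat (1\<^sub>m 1) (0\<^sub>m 1 m) (0\<^sub>m m 1) P2') (Suc m)"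
        unfolding Pb_def by (rule block_ipair[OF PQ2(1)])
      have iQb: "ipair Qb (four_block_mat (1\<^sub>m 1) (0\<^sub>m 1 n') (0\<^sub>m n' 1) Q2') (Suc n')"
        unfolding Qb_def by (rule block_ipair[OF PQ2(2)])
      have cd: "mat 1 1 (\<lambda>_. d) \<in> carrier_mat 1 1" by simp
      have "Pb * C = four_block_mat (mat 1 1 (\<lambda>_. d)) (0\<^sub>m 1 n') (0\<^sub>m m 1) (P2 * C')"
        unfolding Pb_def Csplit using cP2 cC'
        by (subst mult_four_block_mat[of _ 1 1 _ m _ m _ _ 1 _ n']) auto
      then have "Pb * C * Qb = four_block_mat (mat 1 1 (\<lambda>_. d)) (0\<^sub>m 1 n') (0\<^sub>m m 1) (P2 * C' * Q2)"
        unfolding Qb_def using cP2 cC' cQ2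
        by (simp, subst mult_four_block_mat[of _ 1 1 _ n' _ m _ _ 1 _ n']) auto
      also have "\<dots> = four_block_mat (mat 1 1 (\<lambda>_. d)) (0\<^sub>m 1 n') (0\<^sub>m m 1) D2" using PQ2(5) by simp
      finally have PCQ: "Pb * C * Qb = four_block_mat (mat 1 1 (\<lambda>_. d)) (0\<^sub>m 1 n') (0\<^sub>m m 1) D2" .
      define D where "D = four_block_mat (mat 1 1 (\<lambda>_. d)) (0\<^sub>m 1 n') (0\<^sub>m m 1) D2"
      have cD: "D \<in> carrier_mat (Suc m) n" unfolding D_def using four_block_carrier_mat[OF cd PQ2(3)] Suc by simp
      have dD: "diagonal_rect D" unfolding diagonal_rect_def
      proof (intro allI impI)
        fix i j assume ij: "i < dim_row D" "j < dim_col D" "i \<noteq> j"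
        then have i: "i < Suc m" and j: "j < Suc n'" using cD Suc by auto
        show "D $$ (i, j) = 0"
        proof (cases "i = 0 \<or> j = 0")
          case True then show ?thesis unfolding D_def using i j ij(3) PQ2(3) by auto
        next
          case False
          then have "D $$ (i, j) = D2 $$ (i - 1, j - 1)" unfolding D_def using i j PQ2(3) by auto
          also have "\<dots> = 0" using PQ2(4) PQ2(3) i j ij(3) False unfolding diagonal_rect_def by auto
          finally show ?thesis .
        qed
      qed
      obtain PX where iP: "ipair (Pb * L * P1) PX (Suc m)"
        using ipair_mult[OF ipair_mult[OF iPb LU(1)] PQ1(1)] by blast
      obtain QX where iQ: "ipair (Q1 * U * Qb) QX (Suc n')"
        using ipair_mult[OF ipair_mult[OF PQ1(2) LU(2)] iQb] by blast
      have cPb: "Pb \<in> carrier_mat (Suc m) (Suc m)" and cQb: "Qb \<in> carrier_mat (Suc n') (Suc n')"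
        using iPb iQb unfolding ipair_def by auto
      have "Pb * L * P1 * A * (Q1 * U * Qb) = Pb * C * Qb"
        unfolding C_def B_def using cPb cL cP1 A' cQ1 cU cQb
        by (simp add: assoc_mult_mat[of _ "Suc m" "Suc m" _ "Suc m" _ "Suc m"]
          assoc_mult_mat[of _ "Suc m" "Suc m" _ "Suc m" _ "Suc n'"]
          assoc_mult_mat[of _ "Suc m" "Suc m" _ "Suc n'" _ "Suc n'"]
          assoc_mult_mat[of _ "Suc m" "Suc n'" _ "Suc n'" _ "Suc n'"]
          assoc_mult_mat[of _ "Suc n'" "Suc n'" _ "Suc n'" _ "Suc n'"])
      then have "Pb * L * P1 * A * (Q1 * U * Qb) = D" using PCQ D_def by simp
      then show ?thesis using iP iQ cD dD Suc by blast
    qed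
  qed
qed

theorem theorem3p6:
  assumes "arithmetic_ring TYPE('a::comm_ring_1)"
    and "krull_dim_zero TYPE('a)"
  shows "kaplansky_ring TYPE('a) \<and> adequate_ring TYPE('a)"
proof
  show "adequate_ring TYPE('a)" by (rule adequate[OF assms])
  show "kaplansky_ring TYPE('a)" unfolding kaplansky_ring_def
  proof (intro allI impI)
    fix m n and A :: "'a mat" assume A: "A \<in> carrier_mat m n"
    obtain P P' Q Q' D where h: "ipair P P' m" "ipair Q Q' n" "D \<in> carrier_mat m n" "diagonal_rect D" "P * A * Q = D"
      using main_diag[OF assms, of m] A by blast
    have "P \<in> carrier_mat m m" "Q \<in> carrier_mat n n" using h unfolding ipair_def by auto
    then show "\<exists>P Q D. P \<in> carrier_mat m m \<and> Q \<in> carrier_mat n n \<and> invertible_mat P \<and> invertible_mat Q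
           \<and> D \<in> carrier_mat m n \<and> diagonal_rect D \<and> P * A * Q = D"
      using h ipair_inv by blast
  qed
qed

end
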